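(* Let $G$ be a bipartite graph without isolated vertices such that $\mathrm{Ind}(G)$ is pure. Then some pure order of $G$ has a cross if and only if every pure order of $G$ has a cross.
   Context: $\mathrm{Ind}(G)$ is the complex of independent sets of $G$. For a bipartite graph $G$ without isolated vertices with $\mathrm{Ind}(G)$ pure, a pure order of $G$ is a partition of the vertex set into independent sets $\{x_1,\ldots,x_n\}$ and $\{y_1,\ldots,y_n\}$ such that (1) $x_iy_i$ is an edge for all $1\le i\le n$, and (2) whenever $x_iy_j$ and $x_jy_k$ are edges with $i,j,k$ distinct, $x_iy_k$ is an edge. (Such orders exist exactly when $\mathrm{Ind}(G)$ is pure, by a theorem of Villarreal.) A pure order has a cross if there are $i\ne j$ with both $x_iy_j$ and $x_jy_i$ edges of $G$; otherwise it is cross-free. *)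

theory Defs
  imports Main
begin

definition simple_graph :: "'a set \<Rightarrow> ('a \<Rightarrow> 'a \<Rightarrow> bool) \<Rightarrow> bool" where
  "simple_graph V E \<longleftrightarrow> finite V \<and> (\<forall>u v. E u v \<longrightarrow> u \<in> V \<and> v \<in> V)
     \<and> (\<forall>u v. E u v \<longrightarrow> E v u) \<and> (\<forall>v. \<not> E v v)"

definition independent :: "'a set \<Rightarrow> ('a \<Rightarrow> 'a \<Rightarrow> bool) \<Rightarrow> 'a set \<Rightarrow> bool" where
  "independent V E S \<longleftrightarrow> S \<subseteq> V \<and> (\<forall>u\<in>S. \<forall>v\<in>S. \<not> E u v)"

definition bipartite :: "'a set \<Rightarrow> ('a \<Rightarrow> 'a \<Rightarrow> bool) \<Rightarrow> bool" where
  "bipartite V E \<longleftrightarrow> (\<exists>A B. A \<union> B = V \<and> A \<inter> B = {} \<and> independent V E A \<and> independent V E B)"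

definition no_isolated :: "'a set \<Rightarrow> ('a \<Rightarrow> 'a \<Rightarrow> bool) \<Rightarrow> bool" where
  "no_isolated V E \<longleftrightarrow> (\<forall>v\<in>V. \<exists>u. E v u)"

text \<open>Facets of Ind(G) are the maximal independent sets; Ind(G) is pure iff all facets have the same size.\<close>
definition maximal_independent :: "'a set \<Rightarrow> ('a \<Rightarrow> 'a \<Rightarrow> bool) \<Rightarrow> 'a set \<Rightarrow> bool" where
  "maximal_independent V E S \<longleftrightarrow> independent V E S \<and>
     (\<forall>T. independent V E T \<and> S \<subseteq> T \<longrightarrow> T = S)"

definition Ind_pure :: "'a set \<Rightarrow> ('a \<Rightarrow> 'a \<Rightarrow> bool) \<Rightarrow> bool" where
  "Ind_pure V E \<longleftrightarrow> (\<forall>S T. maximal_independent V E S \<and> maximal_independent V E T \<longrightarrow> card S = card T)"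

text \<open>Pure order, indexed by 0..<n instead of 1..n.\<close>
definition pure_order :: "'a set \<Rightarrow> ('a \<Rightarrow> 'a \<Rightarrow> bool) \<Rightarrow> nat \<Rightarrow> (nat \<Rightarrow> 'a) \<Rightarrow> (nat \<Rightarrow> 'a) \<Rightarrow> bool" where
  "pure_order V E n x y \<longleftrightarrow>
     inj_on x {..<n} \<and> inj_on y {..<n} \<and>
     x ` {..<n} \<union> y ` {..<n} = V \<and> x ` {..<n} \<inter> y ` {..<n} = {} \<and>
     independent V E (x ` {..<n}) \<and> independent V E (y ` {..<n}) \<and>
     (\<forall>i<n. E (x i) (y i)) \<and>
     (\<forall>i<n. \<forall>j<n. \<forall>k<n. i \<noteq> j \<and> j \<noteq> k \<and> i \<noteq> k \<and> E (x i) (y j) \<and> E (x j) (y k)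
        \<longrightarrow> E (x i) (y k))"

definition has_cross :: "('a \<Rightarrow> 'a \<Rightarrow> bool) \<Rightarrow> nat \<Rightarrow> (nat \<Rightarrow> 'a) \<Rightarrow> (nat \<Rightarrow> 'a) \<Rightarrow> bool" where
  "has_cross E n x y \<longleftrightarrow> (\<exists>i<n. \<exists>j<n. i \<noteq> j \<and> E (x i) (y j) \<and> E (x j) (y i))"

end

theory Submission imports Defs begin
lemma hall:
  fixes F :: "'i \<Rightarrow> 'b set"
  assumes "finite I" "\<forall>i\<in>I. finite (F i)" "\<forall>S\<subseteq>I. card S \<le> card (\<Union>(F ` S))"
  shows "\<exists>f. inj_on f I \<and> (\<forall>i\<in>I. f i \<in> F i)"
  using assms
proof (induction "card I" arbitrary: I F rule: less_induct)
  case less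
  show ?case
  proof (cases "I = {}")
    case True then show ?thesis by auto
  next
    case False
    show ?thesis
    proof (cases "\<exists>S. S \<subseteq> I \<and> S \<noteq> {} \<and> S \<noteq> I \<and> card (\<Union>(F ` S)) \<le> card S")
      case True
      then obtain S where S: "S \<subseteq> I" "S \<noteq> {}" "S \<noteq> I" "card (\<Union>(F`S)) \<le> card S" by blast
      let ?U = "\<Union>(F`S)"
      have cardU: "card ?U = card S" using less.prems(3) S by (meson le_antisym)
      have fS: "finite S" using S less.prems(1) finite_subset by blast
      have "card S < card I" using S less.prems(1) psubset_card_mono by blast
      then obtain f1 where f1: "inj_on f1 S" "\<forall>i\<in>S. f1 i \<in> F i"
        using less.hyps[of S F] fS less.prems(2,3) S(1) by auto
      define G where "G i = F i - ?U" for i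
      have finU: "finite ?U" using fS less.prems(2) S(1) by auto
      have hallG: "\<forall>T\<subseteq>I-S. card T \<le> card (\<Union>(G`T))"
      proof (intro allI impI)
        fix T assume T: "T \<subseteq> I - S"
        have fT: "finite T" using T less.prems(1) finite_subset by blast
        have "\<Union>(F`(T\<union>S)) = \<Union>(G`T) \<union> ?U" by (auto simp: G_def)
        moreover have "\<Union>(G`T) \<inter> ?U = {}" by (auto simp: G_def)
        moreover have "finite (\<Union>(G`T))" using fT T less.prems(2) by (auto simp: G_def)
        ultimately have "card (\<Union>(F`(T\<union>S))) = card (\<Union>(G`T)) + card ?U"
          using finU by (simp add: card_Un_disjoint)
        moreover have "card (T\<union>S) \<le> card (\<Union>(F`(T\<union>S)))" using less.prems(3) T S(1) by (metis Diff_subset le_sup_iff order_trans)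
        moreover have "card (T\<union>S) = card T + card S" using T fT fS by (subst card_Un_disjoint) auto
        ultimately show "card T \<le> card (\<Union>(G`T))" using cardU by linarith
      qed
      have "I - S \<subset> I" using S by blast
      then have "card (I-S) < card I" using less.prems(1) psubset_card_mono by blast
      then obtain f2 where f2: "inj_on f2 (I-S)" "\<forall>i\<in>I-S. f2 i \<in> G i"
        using less.hyps[of "I-S" G] less.prems hallG by (auto simp: G_def)
      define f where "f i = (if i \<in> S then f1 i else f2 i)" for i
      show ?thesis
      proof (intro exI conjI)
        show "inj_on f I"
          unfolding inj_on_def
        proof (intro ballI impI)
          fix i j assume ij: "i \<in> I" "j \<in> I" "f i = f j"
          show "i = j"
          proof (cases "i \<in> S"; cases "j \<in> S")
            assume "i \<in> S" "j \<in> S" then show ?thesis using ij f1 by (auto simp: f_def inj_on_def)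
          next
            assume "i \<notin> S" "j \<notin> S" then show ?thesis using ij f2 by (auto simp: f_def inj_on_def)
          next
            assume a: "i \<in> S" "j \<notin> S"
            have "f i \<in> ?U" using a f1 by (auto simp: f_def)
            moreover have "f j \<notin> ?U" using a f2 ij(2) by (auto simp: f_def G_def)
            ultimately show ?thesis using ij by auto
          next
            assume a: "i \<notin> S" "j \<in> S"
            have "f j \<in> ?U" using a f1 by (auto simp: f_def)
            moreover have "f i \<notin> ?U" using a f2 ij(1) by (auto simp: f_def G_def)
            ultimately show ?thesis using ij by auto
          qed
        qed
        show "\<forall>i\<in>I. f i \<in> F i" using f1 f2 by (auto simp: f_def G_def)
      qed
    next
      case False
      have strict: "\<forall>S. S \<subseteq> I \<and> S \<noteq> {} \<and> S \<noteq> I \<longrightarrow> card S < card (\<Union>(F`S))"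
      proof (intro allI impI)
        fix S assume "S \<subseteq> I \<and> S \<noteq> {} \<and> S \<noteq> I"
        then have "\<not> card (\<Union>(F`S)) \<le> card S" using False by blast
        then show "card S < card (\<Union>(F`S))" by linarith
      qed
      obtain i0 where i0: "i0 \<in> I" using \<open>I \<noteq> {}\<close> by blast
      have "1 \<le> card (F i0)" using less.prems(3)[rule_format, of "{i0}"] i0 by auto
      then obtain b where b: "b \<in> F i0" by (metis card.empty empty_iff not_one_le_zero subsetI subset_antisym)
      define G where "G i = F i - {b}" for i
      have hallG: "\<forall>T\<subseteq>I-{i0}. card T \<le> card (\<Union>(G`T))"
      proof (intro allI impI)
        fix T assume T: "T \<subseteq> I - {i0}"
        show "card T \<le> card (\<Union>(G`T))"
        proof (cases "T = {}")
          case True then show ?thesis by simp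
        next
          case False
          have "card T < card (\<Union>(F`T))" using strict T False i0 by blast
          moreover have "\<Union>(G`T) = \<Union>(F`T) - {b}" by (auto simp: G_def)
          ultimately show ?thesis by (simp add: card_Diff_singleton_if) linarith
        qed
      qed
      have "I - {i0} \<subset> I" using i0 by blast
      then have "card (I-{i0}) < card I" using less.prems(1) psubset_card_mono by blast
      then obtain f2 where f2: "inj_on f2 (I-{i0})" "\<forall>i\<in>I-{i0}. f2 i \<in> G i"
        using less.hyps[of "I-{i0}" G] less.prems hallG by (auto simp: G_def)
      show ?thesis
      proof (intro exI conjI)
        show "inj_on (f2(i0 := b)) I"
          using f2 i0 by (auto simp: inj_on_def G_def)
        show "\<forall>i\<in>I. (f2(i0 := b)) i \<in> F i" using f2 b by (auto simp: G_def)
      qed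
    qed
  qed
qed

lemma maximal_exists:
  assumes sg: "simple_graph V E" and S: "independent V E S"
  shows "\<exists>M. maximal_independent V E M \<and> S \<subseteq> M"
proof -
  let ?C = "{T. independent V E T \<and> S \<subseteq> T}"
  have "?C \<subseteq> Pow V" by (auto simp: independent_def)
  moreover have "finite V" using sg by (simp add: simple_graph_def)
  ultimately have fC: "finite ?C" by (meson finite_Pow_iff finite_subset)
  have "S \<in> ?C" using S by simp
  then obtain M where M: "M \<in> ?C" "\<forall>b\<in>?C. M \<le> b \<longrightarrow> M = b"
    using finite_has_maximal2[OF fC] by blast
  have "maximal_independent V E M"
    unfolding maximal_independent_def using M by auto
  then show ?thesis using M by auto
qed

lemma card_indep_le:
  assumes sg: "simple_graph V E" and pure: "Ind_pure V E"
    and M0: "maximal_independent V E M0" and S: "independent V E S"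
  shows "card S \<le> card M0"
proof -
  obtain M where M: "maximal_independent V E M" "S \<subseteq> M" using maximal_exists[OF sg S] by blast
  have "finite V" using sg by (simp add: simple_graph_def)
  moreover have "M \<subseteq> V" using M(1) by (simp add: maximal_independent_def independent_def)
  ultimately have "finite M" using finite_subset by blast
  then have "card S \<le> card M" using M card_mono by blast
  also have "card M = card M0" using pure M(1) M0 unfolding Ind_pure_def by blast
  finally show ?thesis .
qed

lemma trans_cond:
  fixes n :: nat
  assumes sg: "simple_graph V E" and pure: "Ind_pure V E"
    and xi: "inj_on x {..<n}" and yi: "inj_on y {..<n}"
    and VV: "x`{..<n} \<union> y`{..<n} = V"
    and mx: "maximal_independent V E (x`{..<n})"
    and m: "\<forall>i<n. E (x i) (y i)"
    and ijk: "i<n" "j<n" "k<n" "i \<noteq> j" "j \<noteq> k" "i \<noteq> k"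
    and e1: "E (x i) (y j)" and e2: "E (x j) (y k)"
  shows "E (x i) (y k)"
proof (rule ccontr)
  assume ne: "\<not> E (x i) (y k)"
  have sym: "\<And>u v. E u v \<Longrightarrow> E v u" and irr: "\<And>v. \<not> E v v"
    using sg by (auto simp: simple_graph_def)
  have "independent V E {x i, y k}"
    unfolding independent_def using ijk VV ne sym irr by auto
  then obtain M where M: "maximal_independent V E M" "{x i, y k} \<subseteq> M"
    using maximal_exists[OF sg] by blast
  have MV: "M \<subseteq> V" and Mind: "\<forall>u\<in>M. \<forall>v\<in>M. \<not> E u v"
    using M by (auto simp: maximal_independent_def independent_def)
  have cM: "card M = n"
  proof -
    have "card M = card (x`{..<n})" using pure M(1) mx unfolding Ind_pure_def by blast
    then show ?thesis using card_image[OF xi] by simp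
  qed
  define K1 where "K1 = {l. l<n \<and> x l \<in> M}"
  define K2 where "K2 = {l. l<n \<and> y l \<in> M}"
  have "M = x`K1 \<union> y`K2" using MV VV by (auto simp: K1_def K2_def)
  then have "card M \<le> card (x`K1) + card (y`K2)" by (simp add: card_Un_le)
  also have "\<dots> \<le> card K1 + card K2" by (simp add: card_image_le K1_def K2_def add_mono)
  also have "card K1 + card K2 = card (K1 \<union> K2)"
  proof -
    have "K1 \<inter> K2 = {}" using Mind m by (auto simp: K1_def K2_def)
    then show ?thesis by (simp add: card_Un_disjoint K1_def K2_def)
  qed
  also have "card (K1 \<union> K2) \<le> card ({..<n} - {j})"
  proof (rule card_mono)
    show "finite ({..<n} - {j})" by simp
    have "x j \<notin> M" using Mind M(2) e2 by auto
    moreover have "y j \<notin> M" using Mind M(2) e1 by auto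
    ultimately show "K1 \<union> K2 \<subseteq> {..<n} - {j}" by (auto simp: K1_def K2_def)
  qed
  also have "\<dots> = n - 1" using ijk by simp
  finally show False using cM ijk by linarith
qed

lemma cross_twins:
  assumes po: "pure_order V E n x y" and ij: "i<n" "j<n" "i\<noteq>j"
    and c1: "E (x i) (y j)" and c2: "E (x j) (y i)"
    and w: "E (x i) w"
    and sg: "simple_graph V E"
  shows "E (x j) w"
proof -
  have XY: "x ` {..<n} \<union> y ` {..<n} = V" and Xi: "independent V E (x ` {..<n})"
    and m: "\<forall>i<n. E (x i) (y i)"
    and tr: "\<forall>i<n. \<forall>j<n. \<forall>k<n. i \<noteq> j \<and> j \<noteq> k \<and> i \<noteq> k \<and> E (x i) (y j) \<and> E (x j) (y k)
        \<longrightarrow> E (x i) (y k)"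
    using po unfolding pure_order_def by blast+
  have "w \<in> V" using w sg unfolding simple_graph_def by blast
  then have wV: "w \<in> x`{..<n} \<union> y`{..<n}" using XY by simp
  have "w \<notin> x`{..<n}"
  proof
    assume "w \<in> x`{..<n}"
    moreover have "x i \<in> x`{..<n}" using ij by simp
    ultimately show False using Xi w unfolding independent_def by blast
  qed
  with wV obtain k where k: "k<n" "w = y k" by blast
  show ?thesis
  proof (cases "k = j")
    case True then show ?thesis using m k ij by simp
  next
    case False
    show ?thesis
    proof (cases "k = i")
      case True then show ?thesis using c2 k by simp
    next
      case False
      have "E (x j) (y k)" using tr ij k(1) c2 w k(2) \<open>k \<noteq> j\<close> False by blast
      then show ?thesis using k by simp
    qed
  qed
qed

lemma twins_cross:
  assumes po: "pure_order V E n x y" and sg: "simple_graph V E" and ni: "no_isolated V E"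
    and uv: "u \<in> V" "v \<in> V" "u \<noteq> v" and tw: "\<forall>w. E u w \<longleftrightarrow> E v w"
  shows "has_cross E n x y"
proof -
  have sym: "\<And>a b. E a b \<Longrightarrow> E b a" using sg unfolding simple_graph_def by blast
  have XY: "x`{..<n} \<union> y`{..<n} = V" using po by (simp add: pure_order_def)
  have XI: "independent V E (x`{..<n})" using po by (simp add: pure_order_def)
  have YI: "independent V E (y`{..<n})" using po by (simp add: pure_order_def)
  have m: "\<forall>i<n. E (x i) (y i)" using po by (simp add: pure_order_def)
  have Xi: "\<forall>a\<in>x`{..<n}. \<forall>b\<in>x`{..<n}. \<not> E a b" using XI unfolding independent_def by (elim conjE)
  have Yi: "\<forall>a\<in>y`{..<n}. \<forall>b\<in>y`{..<n}. \<not> E a b" using YI unfolding independent_def by (elim conjE)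
  have mixed: False if a: "a \<in> x`{..<n}" and b: "b \<in> y`{..<n}" and ab: "a \<in> V" "\<forall>w. E a w \<longleftrightarrow> E b w" for a b
  proof -
    obtain w where aw: "E a w" using ni ab(1) unfolding no_isolated_def by blast
    have bw: "E b w" using aw ab(2) by blast
    have "w \<in> V" using aw sg unfolding simple_graph_def by blast
    then have "w \<in> x`{..<n} \<or> w \<in> y`{..<n}" using XY by blast
    then show False
    proof
      assume "w \<in> x`{..<n}" then show False using Xi a aw by blast
    next
      assume "w \<in> y`{..<n}" then show False using Yi b bw by blast
    qed
  qed
  have uXY: "u \<in> x`{..<n} \<or> u \<in> y`{..<n}" using uv(1) XY by blast
  have vXY: "v \<in> x`{..<n} \<or> v \<in> y`{..<n}" using uv(2) XY by blast
  from uXY vXY show ?thesis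
  proof (elim disjE)
    assume "u \<in> x`{..<n}" "v \<in> x`{..<n}"
    then obtain i j where ij: "i<n" "u = x i" "j<n" "v = x j" by blast
    then have "i \<noteq> j" using uv by auto
    moreover have "E (x i) (y j)" using tw m ij by blast
    moreover have "E (x j) (y i)" using tw m ij by blast
    ultimately show ?thesis using ij unfolding has_cross_def by blast
  next
    assume "u \<in> y`{..<n}" "v \<in> y`{..<n}"
    then obtain i j where ij: "i<n" "u = y i" "j<n" "v = y j" by blast
    then have "i \<noteq> j" using uv by auto
    moreover have "E (x i) (y j)"
    proof -
      have "E (y i) (x i)" using sym m ij by blast
      then have "E (y j) (x i)" using tw ij by blast
      then show ?thesis using sym by blast
    qed
    moreover have "E (x j) (y i)"
    proof -
      have "E (y j) (x j)" using sym m ij by blast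
      then have "E (y i) (x j)" using tw ij by blast
      then show ?thesis using sym by blast
    qed
    ultimately show ?thesis using ij unfolding has_cross_def by blast
  next
    assume "u \<in> x`{..<n}" "v \<in> y`{..<n}"
    then show ?thesis using mixed[of u v] uv tw by blast
  next
    assume "u \<in> y`{..<n}" "v \<in> x`{..<n}"
    moreover have "\<forall>w. E v w \<longleftrightarrow> E u w" using tw by blast
    ultimately show ?thesis using mixed[of v u] uv by blast
  qed
qed

lemma side_maximal:
  assumes sg: "simple_graph V E" and ni: "no_isolated V E"
    and AB: "A \<union> B = V" "A \<inter> B = {}" "independent V E A" "independent V E B"
  shows "maximal_independent V E A"
  unfolding maximal_independent_def
proof (intro conjI allI impI)
  show "independent V E A" by fact
  fix T assume T: "independent V E T \<and> A \<subseteq> T"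
  show "T = A"
  proof (rule ccontr)
    assume "T \<noteq> A"
    then obtain b where b: "b \<in> T" "b \<notin> A" using T by blast
    then have bB: "b \<in> B" using T AB by (auto simp: independent_def)
    obtain u where u: "E b u" using ni bB AB by (auto simp: no_isolated_def)
    then have "u \<in> V" using sg by (auto simp: simple_graph_def)
    moreover have "u \<notin> B" using u bB AB(4) by (auto simp: independent_def)
    ultimately have "u \<in> T" using AB T by auto
    then show False using T b u by (auto simp: independent_def)
  qed
qed

lemma exists_pure_order:
  assumes sg: "simple_graph V E" and bp: "bipartite V E" and ni: "no_isolated V E"
    and pure: "Ind_pure V E"
  shows "\<exists>n x y. pure_order V E n x y"
proof -
  obtain A B where AB: "A \<union> B = V" "A \<inter> B = {}" "independent V E A" "independent V E B"
    using bp by (auto simp: bipartite_def)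
  have sym: "\<And>a b. E a b \<Longrightarrow> E b a" using sg by (auto simp: simple_graph_def)
  have fV: "finite V" using sg by (simp add: simple_graph_def)
  have fA: "finite A" using fV AB(1) finite_subset[of A V] by blast
  have fB: "finite B" using fV AB(1) finite_subset[of B V] by blast
  have mA: "maximal_independent V E A" using side_maximal[OF sg ni AB] .
  have BA: "B \<union> A = V" "B \<inter> A = {}" using AB(1,2) by blast+
  have mB: "maximal_independent V E B" using side_maximal[OF sg ni BA AB(4) AB(3)] .
  have cAB: "card A = card B" using pure mA mB unfolding Ind_pure_def by blast
  define F where "F a = {b. E a b \<and> b \<in> B}" for a
  have hallc: "\<forall>S\<subseteq>A. card S \<le> card (\<Union>(F ` S))"
  proof (intro allI impI)
    fix S assume S: "S \<subseteq> A"
    let ?N = "\<Union>(F ` S)"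
    have NB: "?N \<subseteq> B" by (auto simp: F_def)
    have ind: "independent V E (S \<union> (B - ?N))"
      unfolding independent_def
    proof (intro conjI ballI)
      show "S \<union> (B-?N) \<subseteq> V" using S AB(1) by auto
      fix u v assume u: "u \<in> S \<union> (B - ?N)" and v: "v \<in> S \<union> (B-?N)"
      show "\<not> E u v"
      proof (cases "u \<in> S")
        case uS: True
        show ?thesis
        proof (cases "v \<in> S")
          case True then show ?thesis using uS S AB(3) by (auto simp: independent_def)
        next
          case False then have "v \<in> B" "v \<notin> ?N" using v by auto
          then show ?thesis using uS by (auto simp: F_def)
        qed
      next
        case False then have uB: "u \<in> B" "u \<notin> ?N" using u by auto
        show ?thesis
        proof (cases "v \<in> S")
          case True then show ?thesis using uB sym by (auto simp: F_def)
        next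
          case False then have "v \<in> B" using v by auto
          then show ?thesis using uB AB(4) by (auto simp: independent_def)
        qed
      qed
    qed
    have e1: "card (S \<union> (B - ?N)) = card S + card (B - ?N)"
    proof (rule card_Un_disjoint)
      show "finite S" using S fA finite_subset by blast
      show "finite (B - ?N)" using fB by simp
      show "S \<inter> (B - ?N) = {}" using S AB(2) by blast
    qed
    have e2: "card (B - ?N) = card B - card ?N" using card_Diff_subset[OF finite_subset[OF NB fB] NB] .
    have le: "card (S \<union> (B - ?N)) \<le> card B" using card_indep_le[OF sg pure mB ind] .
    have cN: "card ?N \<le> card B" using card_mono[OF fB NB] .
    show "card S \<le> card ?N" using e1 e2 le cN by linarith
  qed
  have finF: "\<forall>a\<in>A. finite (F a)"
  proof
    fix a assume "a \<in> A"
    have "F a \<subseteq> B" by (auto simp: F_def)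
    then show "finite (F a)" using fB finite_subset by blast
  qed
  obtain f where f: "inj_on f A" "\<forall>a\<in>A. f a \<in> F a"
    using hall[OF fA finF hallc] by blast
  have fAB: "f ` A = B"
  proof (rule card_subset_eq[OF fB])
    show "f ` A \<subseteq> B" using f by (auto simp: F_def)
    show "card (f ` A) = card B" using card_image[OF f(1)] cAB by simp
  qed
  obtain h where h: "bij_betw h {0..<card A} A" using ex_bij_betw_nat_finite[OF fA] by blast
  define n where "n = card A"
  have hb: "bij_betw h {..<n} A" using h by (simp add: n_def atLeast0LessThan)
  then have hi: "inj_on h {..<n}" and hA: "h ` {..<n} = A" by (auto simp: bij_betw_def)
  define y where "y = f \<circ> h"
  have yapp: "\<And>i. y i = f (h i)" by (simp add: y_def)
  have "inj_on f (h`{..<n})" using f(1) hA by simp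
  then have yi: "inj_on y {..<n}" unfolding y_def by (rule comp_inj_on[OF hi])
  have yB: "y ` {..<n} = B" unfolding y_def image_comp[symmetric] using fAB hA by simp
  have m: "\<forall>i<n. E (h i) (y i)"
  proof (intro allI impI)
    fix i assume "i < n"
    then have "h i \<in> A" using hA by blast
    then have "f (h i) \<in> F (h i)" using f(2) by blast
    then show "E (h i) (y i)" unfolding yapp F_def by blast
  qed
  have VV: "h`{..<n} \<union> y`{..<n} = V" using hA yB AB(1) by simp
  have mA': "maximal_independent V E (h`{..<n})" using mA hA by simp
  have trc: "\<forall>i<n. \<forall>j<n. \<forall>k<n. i \<noteq> j \<and> j \<noteq> k \<and> i \<noteq> k \<and> E (h i) (y j) \<and> E (h j) (y k) \<longrightarrow> E (h i) (y k)"
  proof (intro allI impI)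
    fix i j k assume "i < n" "j < n" "k < n" and c: "i \<noteq> j \<and> j \<noteq> k \<and> i \<noteq> k \<and> E (h i) (y j) \<and> E (h j) (y k)"
    then show "E (h i) (y k)"
      using trans_cond[OF sg pure hi yi VV mA' m, of i j k] by blast
  qed
  have d: "h`{..<n} \<inter> y`{..<n} = {}" using AB(2) hA yB by simp
  have i1: "independent V E (h`{..<n})" using AB(3) hA by simp
  have i2: "independent V E (y`{..<n})" using AB(4) yB by simp
  have "pure_order V E n h y"
    unfolding pure_order_def using hi yi VV d i1 i2 m trc by (intro conjI)
  then show ?thesis by blast
qed

theorem lemma4p5:
  fixes V :: "'a set" and E :: "'a \<Rightarrow> 'a \<Rightarrow> bool"
  assumes "simple_graph V E" and "bipartite V E" and "no_isolated V E" and "Ind_pure V E"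
  shows "(\<exists>n x y. pure_order V E n x y \<and> has_cross E n x y) \<longleftrightarrow>
         (\<forall>n x y. pure_order V E n x y \<longrightarrow> has_cross E n x y)"
proof
  assume "\<exists>n x y. pure_order V E n x y \<and> has_cross E n x y"
  then obtain n x y i j where po: "pure_order V E n x y" and ij: "i<n" "j<n" "i\<noteq>j"
    and c: "E (x i) (y j)" "E (x j) (y i)" by (auto simp: has_cross_def)
  have ji: "j \<noteq> i" using ij by simp
  have tw: "\<forall>w. E (x i) w \<longleftrightarrow> E (x j) w"
  proof
    fix w
    show "E (x i) w \<longleftrightarrow> E (x j) w"
    proof
      assume "E (x i) w" then show "E (x j) w" using cross_twins[OF po ij c _ assms(1)] by blast
    next
      assume "E (x j) w" then show "E (x i) w" using cross_twins[OF po ij(2,1) ji c(2,1) _ assms(1)] by blast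
    qed
  qed
  have pv: "x`{..<n} \<union> y`{..<n} = V" "inj_on x {..<n}" using po by (simp_all add: pure_order_def)
  have "x i \<in> V" "x j \<in> V" using pv(1) ij by blast+
  have "x i \<noteq> x j" using pv(2) ij by (simp add: inj_on_eq_iff)
  show "\<forall>n x y. pure_order V E n x y \<longrightarrow> has_cross E n x y"
  proof (intro allI impI)
    fix m x' y' assume "pure_order V E m x' y'"
    from twins_cross[OF this assms(1) assms(3) \<open>x i \<in> V\<close> \<open>x j \<in> V\<close> \<open>x i \<noteq> x j\<close> tw]
    show "has_cross E m x' y'" .
  qed
next
  assume "\<forall>n x y. pure_order V E n x y \<longrightarrow> has_cross E n x y"
  then show "\<exists>n x y. pure_order V E n x y \<and> has_cross E n x y"
    using exists_pure_order[OF assms] by blast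
qed

end
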